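(* Let $b,c,d:[0,1]\to\mathbb{C}$ be continuous with $c(x)d(x)\ne0$ for all $x\in[0,1]$, let $a(x,z)=d(x)z^{-1}+b(x)+c(x)z$, and let $R_n(a)=T_n(a)+\sigma_nX_n$ be as below. Let $k=k(n)$ be a sequence of positive integers with $k\to\infty$, $k=o(n)$ and $k\sigma_n^2\to0$. For $j\in\mathbb{N}$ with $1\le j\le n/k$, let $R_k^{(j)}$ be the $k\times k$ principal submatrix of $R_n(a)$ with row and column indices $(j-1)k+1,\dots,jk$. Fix $j\in\mathbb{N}$. Then for almost every $z\in\mathbb{C}$ and every $\varepsilon>0$, \[ \mathbb{P}\Bigl(\bigl|\log|\det(R_k^{(j)}-zI)|-k\,\gamma(jk/n,z)\bigr|\ge k\varepsilon\Bigr)=o(1)\quad(n\to\infty). \]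
   Context: $T_n(a)$ is the tridiagonal matrix with diagonal entries $b(i/n)$, entries $d(i/n)$ at positions $(i,i+1)$ and $c(i/n)$ at positions $(i+1,i)$. $X_n$ is a random tridiagonal $n\times n$ matrix whose entries on the three central diagonals are i.i.d. with mean $0$ and finite variance (other entries $0$), and $\sigma_n>0$, $\sigma_n\to0$. For $x\in[0,1]$, $T_m(a_x)$ denotes the $m\times m$ tridiagonal Toeplitz matrix with symbol $a_x(z)=d(x)z^{-1}+b(x)+c(x)z$ (diagonal $b(x)$, off-diagonals $d(x)$ and $c(x)$), and $\gamma(x,z):=\lim_{m\to\infty}\frac1m\log|\det(T_m(a_x)-zI)|$, which equals $\log|c(x)|+\log\max(|\lambda_1|,|\lambda_2|)$ where $\lambda_{1,2}$ are the roots of $c(x)\lambda^2+(b(x)-z)\lambda+d(x)=0$. *)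

theory Defs
  imports "HOL-Probability.Probability" "Jordan_Normal_Form.Determinant"
begin

definition tridiag :: "nat \<Rightarrow> nat \<Rightarrow> bool" where
  "tridiag r s \<longleftrightarrow> r = s \<or> s = r + 1 \<or> r = s + 1"

text \<open>The variable-coefficient tridiagonal matrix T_n(a): diagonal b(i/n), position (i,i+1)
  entry d(i/n), position (i+1,i) entry c(i/n) (1-indexed i; here written 0-indexed).\<close>
definition T_mat :: "(real \<Rightarrow> complex) \<Rightarrow> (real \<Rightarrow> complex) \<Rightarrow> (real \<Rightarrow> complex)
    \<Rightarrow> nat \<Rightarrow> complex mat" where
  "T_mat b c d n = mat n n (\<lambda>(r, s).
     if r = s then b (real (r + 1) / real n)
     else if s = r + 1 then d (real (r + 1) / real n)
     else if r = s + 1 then c (real (s + 1) / real n)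
     else 0)"

definition X_mat :: "(nat \<Rightarrow> nat \<Rightarrow> nat \<Rightarrow> 'w \<Rightarrow> complex) \<Rightarrow> nat \<Rightarrow> 'w \<Rightarrow> complex mat" where
  "X_mat \<xi> n \<omega> = mat n n (\<lambda>(r, s). if tridiag r s then \<xi> n r s \<omega> else 0)"

definition R_mat :: "(real \<Rightarrow> complex) \<Rightarrow> (real \<Rightarrow> complex) \<Rightarrow> (real \<Rightarrow> complex)
    \<Rightarrow> (nat \<Rightarrow> real) \<Rightarrow> (nat \<Rightarrow> nat \<Rightarrow> nat \<Rightarrow> 'w \<Rightarrow> complex) \<Rightarrow> nat \<Rightarrow> 'w \<Rightarrow> complex mat" where
  "R_mat b c d \<sigma> \<xi> n \<omega> = T_mat b c d n + complex_of_real (\<sigma> n) \<cdot>\<^sub>m X_mat \<xi> n \<omega>"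

text \<open>The k x k principal submatrix with (1-indexed) row/column indices (j-1)k+1, ..., jk.\<close>
definition principal_block :: "complex mat \<Rightarrow> nat \<Rightarrow> nat \<Rightarrow> complex mat" where
  "principal_block A k j = mat k k (\<lambda>(r, s). A $$ ((j - 1) * k + r, (j - 1) * k + s))"

definition gamma_fn :: "(real \<Rightarrow> complex) \<Rightarrow> (real \<Rightarrow> complex) \<Rightarrow> (real \<Rightarrow> complex)
    \<Rightarrow> real \<Rightarrow> complex \<Rightarrow> real" where
  "gamma_fn b c d x z = ln (cmod (c x)) +
     ln (Max (cmod ` {l. c x * l ^ 2 + (b x - z) * l + d x = 0}))"

end

theory Submission
  imports Defs
begin


fun tdet :: "(nat \<Rightarrow> complex) \<Rightarrow> (nat \<Rightarrow> complex) \<Rightarrow> nat \<Rightarrow> complex" where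
  "tdet a bb 0 = 1"
| "tdet a bb (Suc 0) = a 0"
| "tdet a bb (Suc (Suc m)) = a (Suc m) * tdet a bb (Suc m) - bb (Suc m) * tdet a bb m"

definition Pf :: "(nat \<Rightarrow> nat \<Rightarrow> complex) \<Rightarrow> nat \<Rightarrow> complex mat" where
  "Pf f m = mat m m (\<lambda>(r, s). f r s)"

lemma Pf_step:
  assumes tri: "\<And>r s. \<not> tridiag r s \<Longrightarrow> f r s = 0"
  shows "det (Pf f (Suc (Suc m))) = f (Suc m) (Suc m) * det (Pf f (Suc m))
           - f (Suc m) m * f m (Suc m) * det (Pf f m)"
proof -
  let ?P = "Pf f (Suc (Suc m))"
  have car: "?P \<in> carrier_mat (Suc (Suc m)) (Suc (Suc m))" by (simp add: Pf_def)
  have "det ?P = (\<Sum>j<Suc (Suc m). ?P $$ (Suc m, j) * cofactor ?P (Suc m) j)"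
    by (rule laplace_expansion_row[OF car]) simp
  also have "\<dots> = ?P $$ (Suc m, m) * cofactor ?P (Suc m) m + ?P $$ (Suc m, Suc m) * cofactor ?P (Suc m) (Suc m)"
  proof -
    have "(\<Sum>j<m. ?P $$ (Suc m, j) * cofactor ?P (Suc m) j) = 0"
      by (rule sum.neutral) (auto simp: Pf_def tri tridiag_def)
    then show ?thesis by simp
  qed
  moreover have md: "mat_delete ?P (Suc m) (Suc m) = Pf f (Suc m)"
    by (rule eq_matI) (auto simp: Pf_def mat_delete_def)
  moreover have "cofactor ?P (Suc m) m = - (f m (Suc m) * det (Pf f m))"
  proof -
    let ?Q = "mat_delete ?P (Suc m) m"
    have carQ: "?Q \<in> carrier_mat (Suc m) (Suc m)" by (simp add: Pf_def mat_delete_def)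
    have "det ?Q = (\<Sum>i<Suc m. ?Q $$ (i, m) * cofactor ?Q i m)"
      by (rule laplace_expansion_column[OF carQ]) simp
    also have "\<dots> = ?Q $$ (m, m) * cofactor ?Q m m"
    proof -
      have "(\<Sum>i<m. ?Q $$ (i, m) * cofactor ?Q i m) = 0"
        by (rule sum.neutral) (auto simp: Pf_def mat_delete_def tri tridiag_def)
      then show ?thesis by simp
    qed
    moreover have "mat_delete ?Q m m = Pf f m"
      by (rule eq_matI) (auto simp: Pf_def mat_delete_def)
    ultimately have "det ?Q = f m (Suc m) * det (Pf f m)"
      by (simp add: cofactor_def Pf_def mat_delete_def)
    then show ?thesis by (simp add: cofactor_def)
  qed
  ultimately show ?thesis by (simp add: cofactor_def Pf_def algebra_simps)
qed

lemma det_Pf_tdet: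
  assumes tri: "\<And>r s. \<not> tridiag r s \<Longrightarrow> f r s = 0"
  shows "det (Pf f m) = tdet (\<lambda>i. f i i) (\<lambda>i. f i (i - 1) * f (i - 1) i) m"
proof (induction m rule: less_induct)
  case (less m)
  show ?case
  proof (cases m)
    case 0
    then show ?thesis by (simp add: Pf_def)
  next
    case (Suc m1)
    show ?thesis
    proof (cases m1)
      case 0
      have "Pf f (Suc 0) \<in> carrier_mat 1 1" by (simp add: Pf_def)
      then show ?thesis using Suc 0 by (subst det_def') (auto simp: Pf_def)
    next
      case (Suc m2)
      then show ?thesis using \<open>m = Suc m1\<close> less by (simp add: Pf_step[OF tri])
    qed
  qed
qed



lemma cone_step:
  fixes x y F \<mu>1 \<mu>2 :: complex and q r \<rho> :: real
  assumes "cmod y \<le> cmod x" "cmod F \<le> \<rho> * cmod x" "cmod \<mu>1 = q" "cmod \<mu>2 = r"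
    "r + \<rho> \<le> q - \<rho>" "0 \<le> \<rho>"
  shows "cmod (\<mu>2 * y - F) \<le> cmod (\<mu>1 * x + F)"
    "(q - \<rho>) * cmod x \<le> cmod (\<mu>1 * x + F)"
    "cmod (\<mu>1 * x + F) \<le> (q + \<rho>) * cmod x"
proof -
  have r0: "0 \<le> r" using assms(4) by auto
  have "cmod (\<mu>1 * x + F) \<ge> cmod (\<mu>1 * x) - cmod F" by (metis norm_diff_ineq)
  also have "cmod (\<mu>1 * x) = q * cmod x" using assms by (simp add: norm_mult)
  finally show lo: "(q - \<rho>) * cmod x \<le> cmod (\<mu>1 * x + F)" using assms(2) by (simp add: algebra_simps)
  have "cmod (\<mu>1 * x + F) \<le> cmod (\<mu>1 * x) + cmod F" by (rule norm_triangle_ineq)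
  also have "cmod (\<mu>1 * x) = q * cmod x" using assms by (simp add: norm_mult)
  finally show "cmod (\<mu>1 * x + F) \<le> (q + \<rho>) * cmod x" using assms(2) by (simp add: algebra_simps)
  have "cmod (\<mu>2 * y - F) \<le> cmod (\<mu>2 * y) + cmod F" by (rule norm_triangle_ineq4)
  also have "cmod (\<mu>2 * y) = r * cmod y" using assms by (simp add: norm_mult)
  also have "r * cmod y \<le> r * cmod x" using assms(1) r0 by (simp add: mult_left_mono)
  finally have "cmod (\<mu>2 * y - F) \<le> (r + \<rho>) * cmod x" using assms(2) by (simp add: algebra_simps)
  also have "\<dots> \<le> (q - \<rho>) * cmod x" using assms(5) by (simp add: mult_right_mono)
  finally show "cmod (\<mu>2 * y - F) \<le> cmod (\<mu>1 * x + F)" using lo by linarith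
qed

lemma cone_induct:
  fixes \<mu>1 \<mu>2 :: complex and \<eta> :: real and a bb :: "nat \<Rightarrow> complex"
  defines "q \<equiv> cmod \<mu>1" and "r \<equiv> cmod \<mu>2" and "\<Delta> \<equiv> \<mu>1 - \<mu>2"
  defines "\<rho> \<equiv> \<eta> * (q + r + 2) / cmod \<Delta>"
  defines "x \<equiv> \<lambda>m. (tdet a bb (Suc m) - \<mu>2 * tdet a bb m) / \<Delta>"
  defines "y \<equiv> \<lambda>m. (\<mu>1 * tdet a bb m - tdet a bb (Suc m)) / \<Delta>"
  assumes lt: "r < q" and eta: "0 \<le> \<eta>" and rho: "r + \<rho> \<le> q - \<rho>"
    and ha: "\<And>m. m < N \<Longrightarrow> cmod (a m - (\<mu>1 + \<mu>2)) \<le> \<eta>"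
    and hb: "\<And>m. 0 < m \<Longrightarrow> m < N \<Longrightarrow> cmod (bb m - \<mu>1 * \<mu>2) \<le> \<eta>"
  shows "m < N \<Longrightarrow> cmod (y m) \<le> cmod (x m) \<and> (q - \<rho>) ^ m * ((q - \<eta>) / cmod \<Delta>) \<le> cmod (x m)
          \<and> cmod (x m) \<le> (q + \<rho>) ^ m * ((q + \<eta>) / cmod \<Delta>)"
proof (induction m)
  have D0: "\<Delta> \<noteq> 0" using lt unfolding \<Delta>_def q_def r_def by auto
  have Dpos: "cmod \<Delta> > 0" using D0 by simp
  have Dle: "cmod \<Delta> \<le> q + r" unfolding \<Delta>_def q_def r_def by (rule norm_triangle_ineq4)
  have "\<eta> \<le> \<rho>" 
  proof -
    have "\<eta> * cmod \<Delta> \<le> \<eta> * (q + r + 2)" using Dle eta by (intro mult_left_mono) auto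
    then show ?thesis unfolding \<rho>_def using Dpos by (simp add: field_simps)
  qed
  case 0
  then have a0: "cmod (a 0 - (\<mu>1 + \<mu>2)) \<le> \<eta>" using ha by auto
  define e where "e = a 0 - (\<mu>1 + \<mu>2)"
  have x0: "x 0 = (\<mu>1 + e) / \<Delta>" unfolding x_def e_def by simp
  have y0: "y 0 = - (\<mu>2 + e) / \<Delta>" unfolding y_def e_def by (simp add: algebra_simps)
  have ce: "cmod e \<le> \<eta>" using a0 unfolding e_def .
  have "cmod (\<mu>1 + e) \<ge> q - \<eta>" using ce norm_triangle_ineq4[of "\<mu>1 + e" e] unfolding q_def by simp
  moreover have "cmod (\<mu>1 + e) \<le> q + \<eta>" using ce norm_triangle_ineq[of \<mu>1 e] unfolding q_def by simp
  moreover have "cmod (\<mu>2 + e) \<le> r + \<eta>" using ce norm_triangle_ineq[of \<mu>2 e] unfolding r_def by simp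
  ultimately have "cmod (\<mu>2 + e) \<le> cmod (\<mu>1 + e)" using \<open>\<eta> \<le> \<rho>\<close> rho by linarith
  moreover have "cmod (- (\<mu>2 + e)) = cmod (\<mu>2 + e)" by (rule norm_minus_cancel)
  ultimately show ?case using \<open>q - \<eta> \<le> cmod (\<mu>1 + e)\<close> \<open>cmod (\<mu>1 + e) \<le> q + \<eta>\<close> Dpos
    unfolding x0 y0 norm_divide by (simp add: divide_right_mono)
next
  case (Suc m)
  have D0: "\<Delta> \<noteq> 0" using lt unfolding \<Delta>_def q_def r_def by auto
  have Dpos: "cmod \<Delta> > 0" using D0 by simp
  from Suc have IH: "cmod (y m) \<le> cmod (x m)" "(q - \<rho>) ^ m * ((q - \<eta>) / cmod \<Delta>) \<le> cmod (x m)"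
     "cmod (x m) \<le> (q + \<rho>) ^ m * ((q + \<eta>) / cmod \<Delta>)" by auto
  define F where "F = ((a (Suc m) - (\<mu>1 + \<mu>2)) * tdet a bb (Suc m) - (bb (Suc m) - \<mu>1 * \<mu>2) * tdet a bb m) / \<Delta>"
  have Dsm: "tdet a bb (Suc m) = \<mu>1 * x m + \<mu>2 * y m" unfolding x_def y_def using D0
    by (simp add: field_simps) (simp add: \<Delta>_def algebra_simps)
  have Dm: "tdet a bb m = x m + y m" unfolding x_def y_def using D0
    by (simp add: field_simps) (simp add: \<Delta>_def algebra_simps)
  have xs: "x (Suc m) = \<mu>1 * x m + F"
    unfolding F_def using D0 by (simp add: x_def field_simps)
  have ys: "y (Suc m) = \<mu>2 * y m - F"
    unfolding F_def using D0 by (simp add: y_def field_simps)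
  have hA: "cmod (a (Suc m) - (\<mu>1 + \<mu>2)) \<le> \<eta>" using ha Suc by auto
  have hB: "cmod (bb (Suc m) - \<mu>1 * \<mu>2) \<le> \<eta>" using hb Suc by auto
  have n1: "cmod (tdet a bb (Suc m)) \<le> (q + r) * cmod (x m)"
  proof -
    have "cmod (tdet a bb (Suc m)) \<le> q * cmod (x m) + r * cmod (y m)"
      unfolding Dsm q_def r_def by (metis norm_mult norm_triangle_ineq)
    also have "\<dots> \<le> q * cmod (x m) + r * cmod (x m)" using IH(1) unfolding r_def
      by (simp add: mult_left_mono)
    finally show ?thesis by (simp add: algebra_simps)
  qed
  have n2: "cmod (tdet a bb m) \<le> 2 * cmod (x m)"
    unfolding Dm using IH(1) norm_triangle_ineq[of "x m" "y m"] by simp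
  have "cmod F \<le> (\<eta> * cmod (tdet a bb (Suc m)) + \<eta> * cmod (tdet a bb m)) / cmod \<Delta>"
  proof -
    have "cmod ((a (Suc m) - (\<mu>1 + \<mu>2)) * tdet a bb (Suc m) - (bb (Suc m) - \<mu>1 * \<mu>2) * tdet a bb m)
       \<le> cmod ((a (Suc m) - (\<mu>1 + \<mu>2)) * tdet a bb (Suc m)) + cmod ((bb (Suc m) - \<mu>1 * \<mu>2) * tdet a bb m)"
      by (rule norm_triangle_ineq4)
    also have "\<dots> \<le> \<eta> * cmod (tdet a bb (Suc m)) + \<eta> * cmod (tdet a bb m)"
      unfolding norm_mult using hA hB by (intro add_mono mult_right_mono) auto
    finally show ?thesis unfolding F_def norm_divide using Dpos by (simp add: divide_right_mono)
  qed
  also have "\<dots> \<le> (\<eta> * ((q + r) * cmod (x m)) + \<eta> * (2 * cmod (x m))) / cmod \<Delta>"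
    using n1 n2 eta Dpos by (intro divide_right_mono add_mono mult_left_mono) auto
  also have "\<dots> = \<rho> * cmod (x m)" unfolding \<rho>_def by (simp add: field_simps)
  finally have F: "cmod F \<le> \<rho> * cmod (x m)" .
  have rho0: "0 \<le> \<rho>" unfolding \<rho>_def using eta Dpos unfolding q_def r_def by simp
  have hq: "cmod \<mu>1 = q" and hr: "cmod \<mu>2 = r" by (simp_all add: q_def r_def)
  note cs = cone_step[OF IH(1) F hq hr rho rho0]
  have qr: "0 \<le> q - \<rho>" using rho rho0 hr norm_ge_zero[of \<mu>2] by linarith
  have "(q - \<rho>) ^ Suc m * ((q - \<eta>) / cmod \<Delta>) = (q - \<rho>) * ((q - \<rho>) ^ m * ((q - \<eta>) / cmod \<Delta>))" by simp
  also have "\<dots> \<le> (q - \<rho>) * cmod (x m)" using IH(2) qr by (rule mult_left_mono)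
  also have "\<dots> \<le> cmod (x (Suc m))" using cs(2) xs by simp
  finally have L: "(q - \<rho>) ^ Suc m * ((q - \<eta>) / cmod \<Delta>) \<le> cmod (x (Suc m))" .
  have "cmod (x (Suc m)) \<le> (q + \<rho>) * cmod (x m)" using cs(3) xs by simp
  also have "\<dots> \<le> (q + \<rho>) * ((q + \<rho>) ^ m * ((q + \<eta>) / cmod \<Delta>))"
    using IH(3) qr rho0 by (intro mult_left_mono) auto
  finally have U: "cmod (x (Suc m)) \<le> (q + \<rho>) ^ Suc m * ((q + \<eta>) / cmod \<Delta>)" by simp
  show ?case using cs(1) xs ys L U by simp
qed



lemma tdet_split:
  fixes \<mu>1 \<mu>2 :: complex
  assumes "\<mu>1 \<noteq> \<mu>2"
  shows "tdet a bb (Suc m) = \<mu>1 * ((tdet a bb (Suc m) - \<mu>2 * tdet a bb m) / (\<mu>1 - \<mu>2))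
           + \<mu>2 * ((\<mu>1 * tdet a bb m - tdet a bb (Suc m)) / (\<mu>1 - \<mu>2))"
proof -
  have nz: "\<mu>1 - \<mu>2 \<noteq> 0" using assms by simp
  have "\<mu>1 * (tdet a bb (Suc m) - \<mu>2 * tdet a bb m) + \<mu>2 * (\<mu>1 * tdet a bb m - tdet a bb (Suc m))
      = (\<mu>1 - \<mu>2) * tdet a bb (Suc m)" by (simp add: algebra_simps)
  then show ?thesis using nz
    unfolding times_divide_eq_right add_divide_distrib[symmetric] by simp
qed

lemma tri_growth:
  fixes \<mu>1 \<mu>2 :: complex and \<epsilon> :: real
  assumes lt: "cmod \<mu>2 < cmod \<mu>1" and e: "\<epsilon> > 0"
  shows "\<exists>\<eta>>0. \<exists>K0. \<forall>N a bb. K0 \<le> N \<longrightarrow> (\<forall>m<N. cmod (a m - (\<mu>1 + \<mu>2)) \<le> \<eta>) \<longrightarrow>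
     (\<forall>m. 0 < m \<longrightarrow> m < N \<longrightarrow> cmod (bb m - \<mu>1 * \<mu>2) \<le> \<eta>) \<longrightarrow>
     tdet a bb N \<noteq> 0 \<and> \<bar>ln (cmod (tdet a bb N)) - real N * ln (cmod \<mu>1)\<bar> < real N * \<epsilon>"
proof -
  define q where "q = cmod \<mu>1"
  define r where "r = cmod \<mu>2"
  define \<Delta> where "\<Delta> = \<mu>1 - \<mu>2"
  have r0: "0 \<le> r" unfolding r_def by simp
  have qr: "r < q" using lt unfolding q_def r_def .
  have q0: "0 < q" using r0 qr by linarith
  have D0: "\<Delta> \<noteq> 0" using lt unfolding \<Delta>_def by auto
  have Dpos: "cmod \<Delta> > 0" using D0 by simp
  have Dle: "cmod \<Delta> \<le> q + r" unfolding \<Delta>_def q_def r_def by (rule norm_triangle_ineq4)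
  define \<rho> where "\<rho> = min (min ((q - r) / 2) (q * (1 - exp (- \<epsilon> / 2)))) (q * (exp (\<epsilon> / 2) - 1))"
  have ex1: "exp (- \<epsilon> / 2) < 1" using e by simp
  have ex2: "exp (\<epsilon> / 2) > 1" using e by simp
  have rho0: "0 < \<rho>" unfolding \<rho>_def using qr q0 ex1 ex2 by auto
  have "\<rho> \<le> (q - r) / 2" unfolding \<rho>_def by (meson min.cobounded1 order_trans)
  then have rho1: "r + \<rho> \<le> q - \<rho>" by (simp add: field_simps)
  have rho2: "\<rho> \<le> q * (1 - exp (- \<epsilon> / 2))" "\<rho> \<le> q * (exp (\<epsilon> / 2) - 1)" unfolding \<rho>_def by auto
  define \<eta> where "\<eta> = \<rho> * cmod \<Delta> / (q + r + 2)"
  have eta0: "0 < \<eta>" unfolding \<eta>_def using rho0 Dpos r0 q0 by simp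
  have rho_eq: "\<rho> = \<eta> * (q + r + 2) / cmod \<Delta>" unfolding \<eta>_def using Dpos r0 q0 by simp
  have eta_le: "\<eta> \<le> \<rho>"
  proof -
    have "\<rho> * cmod \<Delta> \<le> \<rho> * (q + r + 2)" using Dle rho0 by (intro mult_left_mono) auto
    then show ?thesis unfolding \<eta>_def using r0 q0 by (simp add: field_simps)
  qed
  have eta_q: "\<eta> \<le> q / 2" using eta_le rho1 r0 by linarith
  define C1 where "C1 = ln (q - r) + ln (q / 2) - ln (cmod \<Delta>) - ln q"
  define C2 where "C2 = ln (q + r) + ln (2 * q) - ln (cmod \<Delta>) - ln q"
  define K0 where "K0 = nat \<lceil>2 * (\<bar>C1\<bar> + \<bar>C2\<bar>) / \<epsilon>\<rceil> + 1"
  have lnlo: "ln q - \<epsilon> / 2 \<le> ln (q - \<rho>)"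
  proof -
    have "q * exp (- \<epsilon> / 2) \<le> q - \<rho>" using rho2(1) by (simp add: algebra_simps)
    moreover have "0 < q * exp (- \<epsilon> / 2)" using q0 by simp
    ultimately have "ln (q * exp (- \<epsilon> / 2)) \<le> ln (q - \<rho>)" by simp
    then show ?thesis using q0 by (simp add: ln_mult)
  qed
  have lnhi: "ln (q + \<rho>) \<le> ln q + \<epsilon> / 2"
  proof -
    have "q + \<rho> \<le> q * exp (\<epsilon> / 2)" using rho2(2) by (simp add: algebra_simps)
    moreover have "0 < q + \<rho>" using q0 rho0 by simp
    ultimately have "ln (q + \<rho>) \<le> ln (q * exp (\<epsilon> / 2))" by simp
    then show ?thesis using q0 by (simp add: ln_mult)
  qed
  show ?thesis
  proof (intro exI[of _ \<eta>] conjI eta0 exI[of _ K0] allI impI)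
    fix N a bb
    assume N: "K0 \<le> N" and ha: "\<forall>m<N. cmod (a m - (\<mu>1 + \<mu>2)) \<le> \<eta>"
      and hb: "\<forall>m. 0 < m \<longrightarrow> m < N \<longrightarrow> cmod (bb m - \<mu>1 * \<mu>2) \<le> \<eta>"
    have N1: "1 \<le> N" using N unfolding K0_def by simp
    define m where "m = N - 1"
    have Nm: "N = Suc m" using N1 unfolding m_def by simp
    define x where "x = (tdet a bb (Suc m) - \<mu>2 * tdet a bb m) / \<Delta>"
    define y where "y = (\<mu>1 * tdet a bb m - tdet a bb (Suc m)) / \<Delta>"
    have ci: "cmod y \<le> cmod x \<and> (q - \<rho>) ^ m * ((q - \<eta>) / cmod \<Delta>) \<le> cmod x
          \<and> cmod x \<le> (q + \<rho>) ^ m * ((q + \<eta>) / cmod \<Delta>)"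
      using cone_induct[of \<mu>2 \<mu>1 \<eta> N a bb m] qr eta0 rho1 ha hb Nm
      unfolding x_def y_def rho_eq q_def r_def \<Delta>_def by auto
    have DN: "tdet a bb N = \<mu>1 * x + \<mu>2 * y"
      unfolding Nm x_def y_def \<Delta>_def using D0 tdet_split[of \<mu>1 \<mu>2 a bb m] \<Delta>_def by auto
    define Lo where "Lo = (q - r) * ((q - \<rho>) ^ m * ((q - \<eta>) / cmod \<Delta>))"
    define Up where "Up = (q + r) * ((q + \<rho>) ^ m * ((q + \<eta>) / cmod \<Delta>))"
    have qrho: "0 < q - \<rho>" using rho1 rho0 r0 by linarith
    have Lo0: "0 < Lo" unfolding Lo_def using qr qrho eta_q q0 Dpos by (intro mult_pos_pos) auto
    have lo: "Lo \<le> cmod (tdet a bb N)"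
    proof -
      have "cmod (\<mu>1 * x) - cmod (\<mu>2 * y) \<le> cmod (tdet a bb N)"
        unfolding DN using norm_diff_ineq[of "\<mu>1 * x" "\<mu>2 * y"] by simp
      moreover have "r * cmod y \<le> r * cmod x" using ci r0 by (simp add: mult_left_mono)
      moreover have "(q - r) * ((q - \<rho>) ^ m * ((q - \<eta>) / cmod \<Delta>)) \<le> (q - r) * cmod x"
        using ci qr by (intro mult_left_mono) auto
      ultimately show ?thesis unfolding Lo_def norm_mult q_def r_def by (simp add: algebra_simps)
    qed
    have up: "cmod (tdet a bb N) \<le> Up"
    proof -
      have "cmod (tdet a bb N) \<le> cmod (\<mu>1 * x) + cmod (\<mu>2 * y)"
        unfolding DN by (rule norm_triangle_ineq)
      moreover have "r * cmod y \<le> r * cmod x" using ci r0 by (simp add: mult_left_mono)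
      moreover have "(q + r) * cmod x \<le> (q + r) * ((q + \<rho>) ^ m * ((q + \<eta>) / cmod \<Delta>))"
        using ci qr r0 by (intro mult_left_mono) auto
      ultimately show ?thesis unfolding Up_def norm_mult q_def r_def by (simp add: algebra_simps)
    qed
    have nz: "tdet a bb N \<noteq> 0" using lo Lo0 by auto
    have lnLo: "ln Lo = ln (q - r) + real m * ln (q - \<rho>) + ln (q - \<eta>) - ln (cmod \<Delta>)"
      unfolding Lo_def using qr qrho eta_q q0 Dpos
      by (simp add: ln_mult ln_div ln_realpow)
    have lnUp: "ln Up = ln (q + r) + real m * ln (q + \<rho>) + ln (q + \<eta>) - ln (cmod \<Delta>)"
      unfolding Up_def using qr rho0 eta0 q0 r0 Dpos
      by (simp add: ln_mult ln_div ln_realpow add_pos_nonneg)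
    have L1: "ln Lo \<le> ln (cmod (tdet a bb N))" using lo Lo0 by (subst ln_le_cancel_iff) auto
    have U1: "ln (cmod (tdet a bb N)) \<le> ln Up" using up nz
      by (subst ln_le_cancel_iff) (auto intro: less_le_trans[of 0 "cmod (tdet a bb N)" Up])
    have "ln (q / 2) \<le> ln (q - \<eta>)" using eta_q q0 by simp
    have "ln (q + \<eta>) \<le> ln (2 * q)" using eta_q q0 eta0 by simp
    have m1: "real m * (ln q - \<epsilon> / 2) \<le> real m * ln (q - \<rho>)" using lnlo by (simp add: mult_left_mono)
    have m2: "real m * ln (q + \<rho>) \<le> real m * (ln q + \<epsilon> / 2)" using lnhi by (simp add: mult_left_mono)
    have lower: "C1 - real m * \<epsilon> / 2 \<le> ln (cmod (tdet a bb N)) - real N * ln q"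
      using L1 lnLo m1 \<open>ln (q / 2) \<le> ln (q - \<eta>)\<close> unfolding C1_def Nm
      by (simp add: algebra_simps)
    have upper: "ln (cmod (tdet a bb N)) - real N * ln q \<le> C2 + real m * \<epsilon> / 2"
      using U1 lnUp m2 \<open>ln (q + \<eta>) \<le> ln (2 * q)\<close> unfolding C2_def Nm
      by (simp add: algebra_simps)
    have "2 * (\<bar>C1\<bar> + \<bar>C2\<bar>) / \<epsilon> < real N" using N unfolding K0_def by linarith
    then have "2 * (\<bar>C1\<bar> + \<bar>C2\<bar>) < real N * \<epsilon>" using e by (simp add: field_simps)
    then have "2 * \<bar>C1\<bar> + 2 * \<bar>C2\<bar> < real N * \<epsilon>" by (simp add: algebra_simps)
    moreover have "real m * \<epsilon> / 2 \<le> real N * \<epsilon> / 2" using e unfolding Nm by simp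
    moreover have "-\<bar>C1\<bar> \<le> C1" "C2 \<le> \<bar>C2\<bar>" "0 \<le> \<bar>C1\<bar>" "0 \<le> \<bar>C2\<bar>" by auto
    ultimately have "\<bar>ln (cmod (tdet a bb N)) - real N * ln q\<bar> < real N * \<epsilon>"
      using lower upper unfolding abs_less_iff by (intro conjI; linarith)

    then show "\<bar>ln (cmod (tdet a bb N)) - real N * ln (cmod \<mu>1)\<bar> < real N * \<epsilon>"
      unfolding q_def by simp
    show "tdet a bb N \<noteq> 0" by (rule nz)
  qed
qed



definition mup :: "complex \<Rightarrow> complex \<Rightarrow> complex" where
  "mup w p = (w + csqrt (w\<^sup>2 - 4 * p)) / 2"
definition mum :: "complex \<Rightarrow> complex \<Rightarrow> complex" where
  "mum w p = (w - csqrt (w\<^sup>2 - 4 * p)) / 2"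
definition AA :: "complex \<Rightarrow> complex \<Rightarrow> real" where
  "AA w p = ((cmod w)\<^sup>2 + cmod (w\<^sup>2 - 4 * p)) / 2"
definition Mx :: "complex \<Rightarrow> complex \<Rightarrow> real" where
  "Mx w p = sqrt ((AA w p + sqrt ((AA w p)\<^sup>2 - 4 * (cmod p)\<^sup>2)) / 2)"

lemma mu_sum: "mup w p + mum w p = w"
  by (simp add: mup_def mum_def field_simps)

lemma mu_prod: "mup w p * mum w p = p"
proof -
  have "mup w p * mum w p = (w\<^sup>2 - (csqrt (w\<^sup>2 - 4 * p))\<^sup>2) / 4"
    by (simp add: mup_def mum_def power2_eq_square field_simps)
  also have "\<dots> = p" by (simp add: power2_csqrt)
  finally show ?thesis .
qed

lemma parallelogram_c: "(cmod (u + v))\<^sup>2 + (cmod (u - v))\<^sup>2 = 2 * (cmod u)\<^sup>2 + 2 * (cmod v)\<^sup>2"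
  unfolding cmod_power2 by (simp add: power2_eq_square algebra_simps)

lemma mu_sq_sum: "(cmod (mup w p))\<^sup>2 + (cmod (mum w p))\<^sup>2 = AA w p"
proof -
  let ?s = "csqrt (w\<^sup>2 - 4 * p)"
  have "(cmod (mup w p))\<^sup>2 + (cmod (mum w p))\<^sup>2 = ((cmod (w + ?s))\<^sup>2 + (cmod (w - ?s))\<^sup>2) / 4"
    by (simp add: mup_def mum_def norm_divide power_divide)
  also have "\<dots> = (2 * (cmod w)\<^sup>2 + 2 * (cmod ?s)\<^sup>2) / 4" by (simp add: parallelogram_c)
  also have "(cmod ?s)\<^sup>2 = cmod (w\<^sup>2 - 4 * p)" by (simp add: norm_power[symmetric] power2_csqrt)
  finally show ?thesis by (simp add: AA_def)
qed

lemma max_sqrt: "0 \<le> a \<Longrightarrow> 0 \<le> b \<Longrightarrow> max (sqrt a) (sqrt b) = sqrt (max a b)"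
  by (auto simp: max_def)

lemma mx_eq: "max (cmod (mup w p)) (cmod (mum w p)) = Mx w p"
proof -
  define a where "a = (cmod (mup w p))\<^sup>2"
  define b where "b = (cmod (mum w p))\<^sup>2"
  have ab: "a + b = AA w p" unfolding a_def b_def by (rule mu_sq_sum)
  have prod: "a * b = (cmod p)\<^sup>2" unfolding a_def b_def
    by (simp add: power_mult_distrib[symmetric] norm_mult[symmetric] mu_prod)
  have "(AA w p)\<^sup>2 - 4 * (cmod p)\<^sup>2 = (a - b)\<^sup>2" unfolding ab[symmetric] prod[symmetric]
    by (simp add: power2_eq_square algebra_simps)
  then have sq: "sqrt ((AA w p)\<^sup>2 - 4 * (cmod p)\<^sup>2) = \<bar>a - b\<bar>" by simp
  have "max a b = (a + b + \<bar>a - b\<bar>) / 2" by (auto simp: max_def abs_if)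
  then have mx: "max a b = (AA w p + sqrt ((AA w p)\<^sup>2 - 4 * (cmod p)\<^sup>2)) / 2"
    unfolding sq ab by simp
  have "max (cmod (mup w p)) (cmod (mum w p)) = max (sqrt a) (sqrt b)"
    unfolding a_def b_def by simp
  also have "\<dots> = sqrt (max a b)" by (rule max_sqrt) (auto simp: a_def b_def)
  finally show ?thesis unfolding mx Mx_def .
qed

lemma Mx_pos: "p \<noteq> 0 \<Longrightarrow> 0 < Mx w p"
proof -
  assume p: "p \<noteq> 0"
  have "mup w p \<noteq> 0" using p mu_prod[of w p] by auto
  then have "0 < max (cmod (mup w p)) (cmod (mum w p))" by (simp add: less_max_iff_disj)
  then show ?thesis by (simp add: mx_eq)
qed

lemma lin_root: "(c::complex) \<noteq> 0 \<Longrightarrow> (-(c * l) - m = 0) = (l = - m / c)"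
  by (auto simp: field_simps)

lemma roots_set:
  fixes c w d :: complex
  assumes c: "c \<noteq> 0"
  shows "{l. c * l ^ 2 + w * l + d = 0} = {- mup w (c * d) / c, - mum w (c * d) / c}"
proof -
  have "c * l ^ 2 + w * l + d = 0 \<longleftrightarrow> l = - mup w (c * d) / c \<or> l = - mum w (c * d) / c" for l
  proof -
    have e: "(-(c * l) - mup w (c * d)) * (-(c * l) - mum w (c * d)) = c * (c * l ^ 2 + w * l + d)"
    proof -
      have "(-(c * l) - mup w (c * d)) * (-(c * l) - mum w (c * d)) =
          (c * l)\<^sup>2 + (mup w (c * d) + mum w (c * d)) * (c * l) + mup w (c * d) * mum w (c * d)"
        by (simp add: power2_eq_square algebra_simps)
      also have "\<dots> = c * (c * l ^ 2 + w * l + d)" unfolding mu_sum mu_prod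
        by (simp add: power2_eq_square algebra_simps)
      finally show ?thesis .
    qed
    have "c * l ^ 2 + w * l + d = 0 \<longleftrightarrow> (-(c * l) - mup w (c * d)) * (-(c * l) - mum w (c * d)) = 0"
      unfolding e using c by simp
    also have "\<dots> \<longleftrightarrow> (-(c * l) - mup w (c * d)) = 0 \<or> (-(c * l) - mum w (c * d)) = 0" by simp
    also have "(-(c * l) - mup w (c * d)) = 0 \<longleftrightarrow> l = - mup w (c * d) / c"
      using c by (rule lin_root)
    also have "(-(c * l) - mum w (c * d)) = 0 \<longleftrightarrow> l = - mum w (c * d) / c"
      using c by (rule lin_root)
    finally show ?thesis .
  qed
  then show ?thesis by auto
qed

lemma gamma_eq:
  assumes "c x \<noteq> 0" "d x \<noteq> 0"
  shows "gamma_fn b c d x z = ln (Mx (b x - z) (c x * d x))"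
proof -
  let ?w = "b x - z" and ?p = "c x * d x"
  have p: "?p \<noteq> 0" using assms by simp
  have "cmod ` {l. c x * l ^ 2 + (b x - z) * l + d x = 0} = {cmod (mup ?w ?p) / cmod (c x), cmod (mum ?w ?p) / cmod (c x)}"
    unfolding roots_set[OF assms(1)] by (simp add: norm_divide)
  note this
  have "Max (cmod ` {l. c x * l ^ 2 + (b x - z) * l + d x = 0}) = max (cmod (mup ?w ?p)) (cmod (mum ?w ?p)) / cmod (c x)"
  proof -
    have k: "0 < cmod (c x)" using assms(1) by simp
    have "max (cmod (mup ?w ?p) / cmod (c x)) (cmod (mum ?w ?p) / cmod (c x)) = max (cmod (mup ?w ?p)) (cmod (mum ?w ?p)) / cmod (c x)"
      using k by (auto simp: max_def field_simps)
    then show ?thesis using \<open>cmod ` _ = _\<close> by simp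
  qed
  also have "\<dots> = Mx ?w ?p / cmod (c x)" by (simp add: mx_eq)
  finally have "gamma_fn b c d x z = ln (cmod (c x)) + ln (Mx ?w ?p / cmod (c x))"
    unfolding gamma_fn_def by simp
  also have "\<dots> = ln (Mx ?w ?p)" using Mx_pos[OF p, of ?w] assms(1) by (simp add: ln_div)
  finally show ?thesis .
qed

lemma Mx_cont:
  assumes "continuous_on S b" "continuous_on S c" "continuous_on S d"
  shows "continuous_on S (\<lambda>x. Mx (b x - z) (c x * d x))"
  unfolding Mx_def AA_def by (intro continuous_intros assms) auto

lemma bad_null:
  fixes b0 p0 :: complex
  assumes p0: "p0 \<noteq> 0"
  shows "\<exists>N \<in> null_sets lborel. \<forall>z. cmod (mup (b0 - z) p0) = cmod (mum (b0 - z) p0) \<longrightarrow> z \<in> N"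
proof -
  define R where "R = sqrt (cmod p0)"
  have R0: "0 < R" using p0 unfolding R_def by simp
  define f where "f = (\<lambda>u::complex. b0 - (u + p0 * inverse u))"
  have nz: "u \<noteq> 0" if "u \<in> sphere 0 R" for u using that R0 by auto
  have dif: "f differentiable_on sphere 0 R"
    unfolding f_def by (intro derivative_intros) (use nz in auto)
  have neg: "negligible (f ` sphere 0 R)"
    by (rule negligible_differentiable_image_negligible[OF _ negligible_sphere dif]) simp
  have "continuous_on (sphere 0 R) f"
    unfolding f_def by (intro continuous_intros) (use nz in auto)
  then have "compact (f ` sphere 0 R)" by (intro compact_continuous_image) auto
  then have "f ` sphere 0 R \<in> sets borel" by (intro borel_closed compact_imp_closed)
  then have nul: "f ` sphere 0 R \<in> null_sets lborel" using neg
    by (auto simp: null_sets_completion_iff negligible_iff_null_sets)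
  have "z \<in> f ` sphere 0 R" if eq: "cmod (mup (b0 - z) p0) = cmod (mum (b0 - z) p0)" for z
  proof -
    let ?u = "mup (b0 - z) p0" and ?v = "mum (b0 - z) p0"
    have uv: "?u * ?v = p0" by (rule mu_prod)
    have "(cmod ?u)\<^sup>2 = cmod p0" using uv eq by (metis norm_mult power2_eq_square)
    then have cu: "cmod ?u = R" unfolding R_def by (metis norm_ge_zero real_sqrt_unique)
    then have u0: "?u \<noteq> 0" using R0 by auto
    have v: "?v = p0 * inverse ?u" using uv u0 by (simp add: field_simps)
    have "z = f ?u" unfolding f_def using mu_sum[of "b0 - z" p0] v by (simp add: algebra_simps)
    moreover have "?u \<in> sphere 0 R" using cu by simp
    ultimately show ?thesis by blast
  qed
  then show ?thesis using nul by blast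
qed



lemma tridiag_shift: "tridiag (m0 + r) (m0 + s) = tridiag r s"
  by (auto simp: tridiag_def)

lemma T_entry: "r < n \<Longrightarrow> s < n \<Longrightarrow> T_mat b c d n $$ (r, s) =
   (if r = s then b (real (r + 1) / real n) else if s = r + 1 then d (real (r + 1) / real n)
    else if r = s + 1 then c (real (s + 1) / real n) else 0)"
  by (simp add: T_mat_def)

lemma block_entry:
  assumes "r < K" "s < K" "(j - 1) * K + K \<le> n"
  shows "(principal_block (R_mat b c d \<sigma> \<xi> n \<omega>) K j - z \<cdot>\<^sub>m 1\<^sub>m K) $$ (r, s) =
     T_mat b c d n $$ ((j - 1) * K + r, (j - 1) * K + s)
     + complex_of_real (\<sigma> n) * (if tridiag r s then \<xi> n ((j - 1) * K + r) ((j - 1) * K + s) \<omega> else 0)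
     - (if r = s then z else 0)"
  using assms
  by (simp add: principal_block_def R_mat_def X_mat_def T_mat_def tridiag_shift)

lemma block_carrier: "principal_block A K j - z \<cdot>\<^sub>m 1\<^sub>m K \<in> carrier_mat K K"
  unfolding carrier_mat_def principal_block_def by simp

lemma prod_close:
  fixes c0 d0 u v :: complex
  assumes "cmod u \<le> t" "cmod v \<le> t"
  shows "cmod ((c0 + u) * (d0 + v) - c0 * d0) \<le> t * (cmod c0 + cmod d0) + t * t"
proof -
  have "(c0 + u) * (d0 + v) - c0 * d0 = c0 * v + d0 * u + u * v" by (simp add: algebra_simps)
  then have "cmod ((c0 + u) * (d0 + v) - c0 * d0) \<le> cmod c0 * cmod v + cmod d0 * cmod u + cmod u * cmod v"
    by (metis norm_mult norm_triangle_le order_refl add_mono)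
  also have "\<dots> \<le> cmod c0 * t + cmod d0 * t + t * t"
    using assms order_trans[OF norm_ge_zero assms(1)] by (intro add_mono mult_mono mult_left_mono) auto
  finally show ?thesis by (simp add: algebra_simps)
qed

lemma block_core:
  fixes b c d :: "real \<Rightarrow> complex" and \<sigma> :: "nat \<Rightarrow> real"
    and \<xi> :: "nat \<Rightarrow> nat \<Rightarrow> nat \<Rightarrow> 'w \<Rightarrow> complex" and \<mu>1 \<mu>2 z :: complex
  assumes j1: "1 \<le> j" and Kn: "j * K \<le> n"
    and sum: "\<mu>1 + \<mu>2 = b 0 - z" and prod: "\<mu>1 * \<mu>2 = c 0 * d 0"
    and t\<eta>: "t \<le> \<eta>" and tb: "t * (cmod (c 0) + cmod (d 0)) + t * t \<le> \<eta>"
    and bc: "\<And>x. 0 \<le> x \<Longrightarrow> x \<le> real (j * K) / real n \<Longrightarrow> cmod (b x - b 0) < t / 2"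
    and cc: "\<And>x. 0 \<le> x \<Longrightarrow> x \<le> real (j * K) / real n \<Longrightarrow> cmod (c x - c 0) < t / 2"
    and dc: "\<And>x. 0 \<le> x \<Longrightarrow> x \<le> real (j * K) / real n \<Longrightarrow> cmod (d x - d 0) < t / 2"
    and small: "\<And>r s. r < K \<Longrightarrow> s < K \<Longrightarrow> tridiag r s \<Longrightarrow>
        cmod (complex_of_real (\<sigma> n) * \<xi> n ((j - 1) * K + r) ((j - 1) * K + s) \<omega>) < t / 2"
  shows "\<exists>\<alpha> \<beta>. det (principal_block (R_mat b c d \<sigma> \<xi> n \<omega>) K j - z \<cdot>\<^sub>m 1\<^sub>m K) = tdet \<alpha> \<beta> K
     \<and> (\<forall>m<K. cmod (\<alpha> m - (\<mu>1 + \<mu>2)) \<le> \<eta>) \<and> (\<forall>m. 0 < m \<longrightarrow> m < K \<longrightarrow> cmod (\<beta> m - \<mu>1 * \<mu>2) \<le> \<eta>)"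
proof -
  define off where "off = (j - 1) * K"
  have offK: "off + K = j * K" unfolding off_def using j1 by (cases j) auto
  have offn: "off + K \<le> n" using offK Kn by simp
  define B where "B = principal_block (R_mat b c d \<sigma> \<xi> n \<omega>) K j - z \<cdot>\<^sub>m 1\<^sub>m K"
  have ent: "B $$ (r, s) = T_mat b c d n $$ (off + r, off + s)
     + complex_of_real (\<sigma> n) * (if tridiag r s then \<xi> n (off + r) (off + s) \<omega> else 0)
     - (if r = s then z else 0)" if "r < K" "s < K" for r s
    unfolding B_def off_def by (rule block_entry) (use that offn in \<open>auto simp: off_def\<close>)
  define f where "f = (\<lambda>r s. if r < K \<and> s < K then B $$ (r, s) else 0)"
  have BP: "B = Pf f K"
    by (rule eq_matI) (auto simp: Pf_def f_def B_def principal_block_def)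
  have tri: "f r s = 0" if "\<not> tridiag r s" for r s
  proof (cases "r < K \<and> s < K")
    case True
    have "r \<noteq> s" "s \<noteq> r + 1" "r \<noteq> s + 1" using that by (auto simp: tridiag_def)
    then have "T_mat b c d n $$ (off + r, off + s) = 0" using True offn by (subst T_entry) auto
    then show ?thesis using True that \<open>r \<noteq> s\<close> by (simp add: f_def ent)
  qed (auto simp: f_def)
  define \<alpha> where "\<alpha> = (\<lambda>i. f i i)"
  define \<beta> where "\<beta> = (\<lambda>i. f i (i - 1) * f (i - 1) i)"
  have detB: "det B = tdet \<alpha> \<beta> K" unfolding BP \<alpha>_def \<beta>_def by (rule det_Pf_tdet) (rule tri)
  have xrange: "0 \<le> real (off + i + 1) / real n \<and> real (off + i + 1) / real n \<le> real (j * K) / real n"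
    if "i < K" for i
  proof -
    have "off + i + 1 \<le> j * K" using that offK by simp
    then have "real (off + i + 1) \<le> real (j * K)" by (simp only: of_nat_le_iff)
    then show ?thesis by (intro conjI divide_right_mono divide_nonneg_nonneg) auto
  qed
  have tri_ii: "tridiag i i" for i by (simp add: tridiag_def)
  have A: "cmod (\<alpha> i - (\<mu>1 + \<mu>2)) \<le> \<eta>" if i: "i < K" for i
  proof -
    have "T_mat b c d n $$ (off + i, off + i) = b (real (off + i + 1) / real n)"
      using i offn by (subst T_entry) auto
    then have "\<alpha> i - (\<mu>1 + \<mu>2) = (b (real (off + i + 1) / real n) - b 0)
        + complex_of_real (\<sigma> n) * \<xi> n (off + i) (off + i) \<omega>"
      unfolding \<alpha>_def f_def sum using i ent[OF i i] tri_ii[of i] by simp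
    also have "cmod \<dots> \<le> cmod (b (real (off + i + 1) / real n) - b 0) + cmod (complex_of_real (\<sigma> n) * \<xi> n (off + i) (off + i) \<omega>)"
      by (rule norm_triangle_ineq)
    also have "\<dots> < t / 2 + t / 2"
      using bc[OF conjunct1[OF xrange[OF i]] conjunct2[OF xrange[OF i]]]
        small[OF i i tri_ii[of i]] unfolding off_def by (rule add_strict_mono)
    finally show ?thesis using t\<eta> by simp
  qed
  have Bb: "cmod (\<beta> i - \<mu>1 * \<mu>2) \<le> \<eta>" if i0: "0 < i" and i: "i < K" for i
  proof -
    define i' where "i' = i - 1"
    have ii: "i = Suc i'" using i0 unfolding i'_def by simp
    have i'K: "i' < K" using i ii by simp
    have t1: "tridiag (Suc i') i'" "tridiag i' (Suc i')" by (auto simp: tridiag_def)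
    have "T_mat b c d n $$ (off + Suc i', off + i') = c (real (off + i' + 1) / real n)"
      using i offn ii by (subst T_entry) auto
    then have e1: "f i i' = c (real (off + i' + 1) / real n) + complex_of_real (\<sigma> n) * \<xi> n (off + i) (off + i') \<omega>"
      unfolding f_def using i i'K ent[OF i i'K] t1 ii by simp
    have "T_mat b c d n $$ (off + i', off + Suc i') = d (real (off + i' + 1) / real n)"
      using i offn ii by (subst T_entry) auto
    then have e2: "f i' i = d (real (off + i' + 1) / real n) + complex_of_real (\<sigma> n) * \<xi> n (off + i') (off + i) \<omega>"
      unfolding f_def using i i'K ent[OF i'K i] t1 ii by simp
    define u where "u = f i i' - c 0"
    define v where "v = f i' i - d 0"
    have xr: "0 \<le> real (off + i' + 1) / real n" "real (off + i' + 1) / real n \<le> real (j * K) / real n"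
      using xrange[OF i'K] by auto
    have t2: "tridiag i i'" "tridiag i' i" using t1 ii by auto
    have "u = (c (real (off + i' + 1) / real n) - c 0) + complex_of_real (\<sigma> n) * \<xi> n (off + i) (off + i') \<omega>"
      unfolding u_def e1 by simp
    then have "cmod u \<le> cmod (c (real (off + i' + 1) / real n) - c 0) + cmod (complex_of_real (\<sigma> n) * \<xi> n (off + i) (off + i') \<omega>)"
      by (simp add: norm_triangle_ineq)
    also have "\<dots> < t / 2 + t / 2"
      using cc[OF xr] small[OF i i'K t2(1)] unfolding off_def by (rule add_strict_mono)
    finally have u: "cmod u \<le> t" by simp
    have "v = (d (real (off + i' + 1) / real n) - d 0) + complex_of_real (\<sigma> n) * \<xi> n (off + i') (off + i) \<omega>"
      unfolding v_def e2 by simp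
    then have "cmod v \<le> cmod (d (real (off + i' + 1) / real n) - d 0) + cmod (complex_of_real (\<sigma> n) * \<xi> n (off + i') (off + i) \<omega>)"
      by (simp add: norm_triangle_ineq)
    also have "\<dots> < t / 2 + t / 2"
      using dc[OF xr] small[OF i'K i t2(2)] unfolding off_def by (rule add_strict_mono)
    finally have v: "cmod v \<le> t" by simp
    have "\<beta> i = (c 0 + u) * (d 0 + v)" unfolding \<beta>_def u_def v_def i'_def by simp
    then have "cmod (\<beta> i - \<mu>1 * \<mu>2) \<le> t * (cmod (c 0) + cmod (d 0)) + t * t"
      unfolding prod using prod_close[OF u v] by simp
    then show ?thesis using tb by simp
  qed
  show ?thesis using detB A Bb unfolding B_def by blast
qed



lemma main_fixed:
  fixes M :: "'w measure"
    and b c d :: "real \<Rightarrow> complex"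
    and \<sigma> :: "nat \<Rightarrow> real"
    and \<xi> :: "nat \<Rightarrow> nat \<Rightarrow> nat \<Rightarrow> 'w \<Rightarrow> complex"
    and \<mu> :: "complex measure"
    and k :: "nat \<Rightarrow> nat"
    and j :: nat and z :: complex and \<epsilon> :: real
  assumes pM: "prob_space M"
    and cb: "continuous_on {0..1} b" and cc: "continuous_on {0..1} c" and cd: "continuous_on {0..1} d"
    and cdnz: "\<And>x. x \<in> {0..1} \<Longrightarrow> c x * d x \<noteq> 0"
    and sigpos: "\<And>n. \<sigma> n > 0"
    and meas: "\<And>n r s. r < n \<Longrightarrow> s < n \<Longrightarrow> tridiag r s \<Longrightarrow> \<xi> n r s \<in> borel_measurable M"
    and distr_eq: "\<And>n r s. r < n \<Longrightarrow> s < n \<Longrightarrow> tridiag r s \<Longrightarrow> distr M borel (\<xi> n r s) = \<mu>"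
    and integ2: "\<And>n r s. r < n \<Longrightarrow> s < n \<Longrightarrow> tridiag r s \<Longrightarrow>
           integrable M (\<lambda>\<omega>. (cmod (\<xi> n r s \<omega>))\<^sup>2)"
    and kpos: "\<And>n. k n > 0" and klim: "filterlim k at_top sequentially"
    and kn: "(\<lambda>n. real (k n) / real n) \<longlonglongrightarrow> 0"
    and ksig: "(\<lambda>n. real (k n) * (\<sigma> n)\<^sup>2) \<longlonglongrightarrow> 0"
    and j1: "j \<ge> 1"
    and zgood: "cmod (mup (b 0 - z) (c 0 * d 0)) \<noteq> cmod (mum (b 0 - z) (c 0 * d 0))"
    and e: "\<epsilon> > 0"
  shows "(\<lambda>n. measure M {\<omega> \<in> space M.
        det (principal_block (R_mat b c d \<sigma> \<xi> n \<omega>) (k n) j - z \<cdot>\<^sub>m 1\<^sub>m (k n)) = 0 \<or>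
        \<bar>ln (cmod (det (principal_block (R_mat b c d \<sigma> \<xi> n \<omega>) (k n) j - z \<cdot>\<^sub>m 1\<^sub>m (k n))))
          - real (k n) * gamma_fn b c d (real (j * k n) / real n) z\<bar> \<ge> real (k n) * \<epsilon>})
     \<longlonglongrightarrow> 0"
proof -
  interpret P: prob_space M by (rule pM)
  define w0 where "w0 = b 0 - z"
  define p0 where "p0 = c 0 * d 0"
  have p0: "p0 \<noteq> 0" using cdnz[of 0] unfolding p0_def by simp
  obtain \<mu>1 \<mu>2 where s12: "\<mu>1 + \<mu>2 = w0" and p12: "\<mu>1 * \<mu>2 = p0" and lt: "cmod \<mu>2 < cmod \<mu>1"
      and q: "cmod \<mu>1 = Mx w0 p0"
  proof (cases "cmod (mum w0 p0) < cmod (mup w0 p0)")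
    case True
    then show ?thesis using that[of "mup w0 p0" "mum w0 p0"] mu_sum[of w0 p0] mu_prod[of w0 p0]
        mx_eq[of w0 p0] by (simp add: max_def)
  next
    case False
    then have "cmod (mup w0 p0) < cmod (mum w0 p0)" using zgood unfolding w0_def p0_def by linarith
    then show ?thesis using that[of "mum w0 p0" "mup w0 p0"] mu_sum[of w0 p0] mu_prod[of w0 p0]
        mx_eq[of w0 p0] by (simp add: max_def add.commute mult.commute)
  qed
  have e2: "0 < \<epsilon> / 2" using e by simp
  obtain \<eta> K0 where eta0: "\<eta> > 0" and growth: "\<forall>N a bb. K0 \<le> N \<longrightarrow> (\<forall>m<N. cmod (a m - (\<mu>1 + \<mu>2)) \<le> \<eta>) \<longrightarrow>
     (\<forall>m. 0 < m \<longrightarrow> m < N \<longrightarrow> cmod (bb m - \<mu>1 * \<mu>2) \<le> \<eta>) \<longrightarrow>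
     tdet a bb N \<noteq> 0 \<and> \<bar>ln (cmod (tdet a bb N)) - real N * ln (cmod \<mu>1)\<bar> < real N * (\<epsilon> / 2)"
    using tri_growth[OF lt e2] by blast
  define S where "S = cmod (c 0) + cmod (d 0)"
  have S0: "0 \<le> S" unfolding S_def by simp
  define t where "t = min 1 (\<eta> / (S + 1))"
  have t0: "0 < t" using eta0 S0 unfolding t_def by simp
  have t1: "t \<le> 1" by (simp add: t_def)
  have tS: "t * (S + 1) \<le> \<eta>"
  proof -
    have "t \<le> \<eta> / (S + 1)" by (simp add: t_def)
    then show ?thesis using S0 by (simp add: pos_le_divide_eq)
  qed
  have tS0: "0 \<le> t * S" using t0 S0 by simp
  have t\<eta>: "t \<le> \<eta>" using tS tS0 by (simp add: algebra_simps)
  have tb: "t * (cmod (c 0) + cmod (d 0)) + t * t \<le> \<eta>"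
  proof -
    have "t * t \<le> t * 1" using t1 t0 by (intro mult_left_mono) auto
    then show ?thesis using tS unfolding S_def by (simp add: algebra_simps)
  qed
  have t2: "0 < t / 2" using t0 by simp
  have zin: "(0::real) \<in> {0..1}" by simp
  obtain \<delta>b where db: "\<delta>b > 0" "\<forall>x\<in>{0..1}. dist x 0 < \<delta>b \<longrightarrow> dist (b x) (b 0) < t / 2"
    using cb zin t2 unfolding continuous_on_iff by blast
  obtain \<delta>c where dc: "\<delta>c > 0" "\<forall>x\<in>{0..1}. dist x 0 < \<delta>c \<longrightarrow> dist (c x) (c 0) < t / 2"
    using cc zin t2 unfolding continuous_on_iff by blast
  obtain \<delta>d where dd: "\<delta>d > 0" "\<forall>x\<in>{0..1}. dist x 0 < \<delta>d \<longrightarrow> dist (d x) (d 0) < t / 2"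
    using cd zin t2 unfolding continuous_on_iff by blast
  define \<delta> where "\<delta> = min (min \<delta>b \<delta>c) (min \<delta>d 1)"
  have \<delta>0: "0 < \<delta>" using db dc dd unfolding \<delta>_def by simp
  have bcl: "cmod (b x - b 0) < t / 2" "cmod (c x - c 0) < t / 2" "cmod (d x - d 0) < t / 2"
    if "0 \<le> x" "x < \<delta>" for x
  proof -
    have x: "x \<in> {0..1}" "dist x 0 < \<delta>b" "dist x 0 < \<delta>c" "dist x 0 < \<delta>d"
      using that unfolding \<delta>_def by (auto simp: dist_real_def)
    show "cmod (b x - b 0) < t / 2" using db x by (simp add: dist_norm)
    show "cmod (c x - c 0) < t / 2" using dc x by (simp add: dist_norm)
    show "cmod (d x - d 0) < t / 2" using dd x by (simp add: dist_norm)
  qed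
  define xs where "xs = (\<lambda>n. real (j * k n) / real n)"
  have xs_eq: "xs = (\<lambda>n. real j * (real (k n) / real n))" unfolding xs_def by (auto simp: fun_eq_iff)
  have xs_lim: "xs \<longlonglongrightarrow> 0" unfolding xs_eq by (rule tendsto_mult_right_zero[OF kn])
  have xs0: "0 \<le> xs n" for n unfolding xs_def by simp
  have ev_xs: "eventually (\<lambda>n. xs n < \<delta>) sequentially"
    using order_tendstoD(2)[OF xs_lim \<delta>0] .
  have ev_xs01: "eventually (\<lambda>n. xs n \<in> {0..1}) sequentially"
    using ev_xs xs0 unfolding \<delta>_def by (auto elim!: eventually_mono)
  define G where "G = (\<lambda>x. Mx (b x - z) (c x * d x))"
  have contG: "continuous_on {0..1} G" unfolding G_def by (rule Mx_cont[OF cb cc cd])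
  have G0: "G 0 = cmod \<mu>1" unfolding G_def q w0_def p0_def by simp
  have "(\<lambda>n. G (xs n)) \<longlonglongrightarrow> G 0"
    by (rule continuous_on_tendsto_compose[OF contG xs_lim zin ev_xs01])
  then have "(\<lambda>n. ln (G (xs n))) \<longlonglongrightarrow> ln (cmod \<mu>1)" unfolding G0
    by (rule tendsto_ln) (use lt in auto)
  then have ev_gam: "eventually (\<lambda>n. \<bar>ln (G (xs n)) - ln (cmod \<mu>1)\<bar> < \<epsilon> / 2) sequentially"
    using e2 unfolding tendsto_iff dist_real_def by blast
  have ev_K: "eventually (\<lambda>n. K0 \<le> k n) sequentially"
    using klim unfolding filterlim_at_top by blast
  have ev_n: "eventually (\<lambda>n. 0 < n) sequentially" by (rule eventually_gt_at_top)
  define V where "V = (\<integral>x. (cmod x)\<^sup>2 \<partial>\<mu>)"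
  have EV: "(\<integral>\<omega>. (cmod (\<xi> n r s \<omega>))\<^sup>2 \<partial>M) = V" if "r < n" "s < n" "tridiag r s" for n r s
  proof -
    have m: "\<xi> n r s \<in> M \<rightarrow>\<^sub>M borel" using meas[OF that] .
    have f: "(\<lambda>x::complex. (cmod x)\<^sup>2) \<in> borel_measurable borel" by measurable
    show ?thesis unfolding V_def distr_eq[OF that, symmetric] integral_distr[OF m f] ..
  qed
  have V0: "0 \<le> V" unfolding V_def by simp
  define g where "g = (\<lambda>n. 3 * real (k n) * (\<sigma> n)\<^sup>2 * V / (t / 2)\<^sup>2)"
  have g_eq: "g = (\<lambda>n. (3 * V / (t / 2)\<^sup>2) * (real (k n) * (\<sigma> n)\<^sup>2))"
    unfolding g_def by (auto simp: fun_eq_iff)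
  have g_lim: "g \<longlonglongrightarrow> 0" unfolding g_eq by (rule tendsto_mult_right_zero[OF ksig])
  have bound: "norm (measure M {\<omega> \<in> space M.
        det (principal_block (R_mat b c d \<sigma> \<xi> n \<omega>) (k n) j - z \<cdot>\<^sub>m 1\<^sub>m (k n)) = 0 \<or>
        \<bar>ln (cmod (det (principal_block (R_mat b c d \<sigma> \<xi> n \<omega>) (k n) j - z \<cdot>\<^sub>m 1\<^sub>m (k n))))
          - real (k n) * gamma_fn b c d (real (j * k n) / real n) z\<bar> \<ge> real (k n) * \<epsilon>}) \<le> g n"
    if n0: "0 < n" and nxs: "xs n < \<delta>" and nK: "K0 \<le> k n"
      and ngam: "\<bar>ln (G (xs n)) - ln (cmod \<mu>1)\<bar> < \<epsilon> / 2" for n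
  proof -
    define K where "K = k n"
    define off where "off = (j - 1) * K"
    have xs1: "xs n < 1" using nxs unfolding \<delta>_def by simp
    have jKn: "j * K \<le> n"
    proof -
      have "real (j * K) / real n < 1" using xs1 unfolding xs_def K_def .
      then have "real (j * K) < real n" using n0 by (simp add: divide_less_eq)
      then have "j * K < n" by (simp only: of_nat_less_iff)
      then show ?thesis by simp
    qed
    have offK: "off + K = j * K" unfolding off_def using j1 by (cases j) auto
    define J where "J = {(r, s). r < K \<and> s < K \<and> tridiag r s}"
    define Ev where "Ev = (\<lambda>(r, s). {\<omega> \<in> space M. (t / 2)\<^sup>2 \<le> (\<sigma> n)\<^sup>2 * (cmod (\<xi> n (off + r) (off + s) \<omega>))\<^sup>2})"
    have idx: "off + r < n" "off + s < n" "tridiag (off + r) (off + s)" if "(r, s) \<in> J" for r s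
      using that offK jKn unfolding J_def by (auto simp: tridiag_shift)
    have Ev_sets: "Ev i \<in> sets M" if "i \<in> J" for i
    proof -
      obtain r s where i: "i = (r, s)" by (cases i)
      note [measurable] = meas[OF idx[OF that[unfolded i]]]
      show ?thesis unfolding i Ev_def prod.case by measurable
    qed
    have Ev_meas: "measure M (Ev i) \<le> (\<sigma> n)\<^sup>2 * V / (t / 2)\<^sup>2" if "i \<in> J" for i
    proof -
      obtain r s where i: "i = (r, s)" by (cases i)
      have int: "integrable M (\<lambda>\<omega>. (\<sigma> n)\<^sup>2 * (cmod (\<xi> n (off + r) (off + s) \<omega>))\<^sup>2)"
        using integ2[OF idx[OF that[unfolded i]]] by simp
      have "measure M (Ev i) \<le> (\<integral>\<omega>. (\<sigma> n)\<^sup>2 * (cmod (\<xi> n (off + r) (off + s) \<omega>))\<^sup>2 \<partial>M) / (t / 2)\<^sup>2"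
        unfolding i Ev_def prod.case using t2
        by (intro integral_Markov_inequality_measure[OF int, of "space M"]) auto
      also have "\<dots> = (\<sigma> n)\<^sup>2 * V / (t / 2)\<^sup>2" using EV[OF idx[OF that[unfolded i]]] by simp
      finally show ?thesis .
    qed
    have finJ: "finite J" by (rule finite_subset[of J "{..<K} \<times> {..<K}"]) (auto simp: J_def)
    have cardJ: "card J \<le> 3 * K"
    proof -
      have "J \<subseteq> (\<lambda>r. (r, r)) ` {..<K} \<union> (\<lambda>r. (r, r + 1)) ` {..<K} \<union> (\<lambda>r. (r + 1, r)) ` {..<K}"
        unfolding J_def tridiag_def by auto
      then have "card J \<le> card ((\<lambda>r. (r, r)) ` {..<K} \<union> (\<lambda>r. (r, r + 1)) ` {..<K} \<union> (\<lambda>r. (r + 1, r)) ` {..<K})"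
        by (intro card_mono) auto
      also have "\<dots> \<le> card ((\<lambda>r. (r, r)) ` {..<K}) + card ((\<lambda>r. (r, r + 1)) ` {..<K}) + card ((\<lambda>r. (r + 1, r)) ` {..<K})"
        by (rule order_trans[OF card_Un_le add_right_mono[OF card_Un_le]])
      also have "\<dots> \<le> K + K + K" by (intro add_mono card_image_le[THEN order_trans]) auto
      finally show ?thesis by simp
    qed
    let ?bad = "{\<omega> \<in> space M.
        det (principal_block (R_mat b c d \<sigma> \<xi> n \<omega>) (k n) j - z \<cdot>\<^sub>m 1\<^sub>m (k n)) = 0 \<or>
        \<bar>ln (cmod (det (principal_block (R_mat b c d \<sigma> \<xi> n \<omega>) (k n) j - z \<cdot>\<^sub>m 1\<^sub>m (k n))))
          - real (k n) * gamma_fn b c d (real (j * k n) / real n) z\<bar> \<ge> real (k n) * \<epsilon>}"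
    have sub: "?bad \<subseteq> (\<Union>i\<in>J. Ev i)"
    proof
      fix \<omega> assume w: "\<omega> \<in> ?bad"
      show "\<omega> \<in> (\<Union>i\<in>J. Ev i)"
      proof (rule ccontr)
        assume nw: "\<omega> \<notin> (\<Union>i\<in>J. Ev i)"
        have wM: "\<omega> \<in> space M" using w by simp
        have small: "cmod (complex_of_real (\<sigma> n) * \<xi> n ((j - 1) * K + r) ((j - 1) * K + s) \<omega>) < t / 2"
          if "r < K" "s < K" "tridiag r s" for r s
        proof -
          have "(r, s) \<in> J" using that unfolding J_def by simp
          then have "\<omega> \<notin> Ev (r, s)" using nw by blast
          then have "(\<sigma> n)\<^sup>2 * (cmod (\<xi> n (off + r) (off + s) \<omega>))\<^sup>2 < (t / 2)\<^sup>2"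
            using wM unfolding Ev_def by auto
          then have "(\<sigma> n * cmod (\<xi> n (off + r) (off + s) \<omega>))\<^sup>2 < (t / 2)\<^sup>2"
            by (simp add: power_mult_distrib)
          then have "\<sigma> n * cmod (\<xi> n (off + r) (off + s) \<omega>) < t / 2"
            by (rule power2_less_imp_less) (use t2 in linarith)
          then show ?thesis using sigpos[of n] unfolding off_def by (simp add: norm_mult)
        qed
        have bc': "cmod (b x - b 0) < t / 2" "cmod (c x - c 0) < t / 2" "cmod (d x - d 0) < t / 2"
          if "0 \<le> x" "x \<le> real (j * K) / real n" for x
        proof -
          have "x < \<delta>" using that nxs unfolding xs_def K_def by simp
          then show "cmod (b x - b 0) < t / 2" "cmod (c x - c 0) < t / 2" "cmod (d x - d 0) < t / 2"
            using bcl that by auto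
        qed
        have bcr: "\<exists>\<alpha> \<beta>. det (principal_block (R_mat b c d \<sigma> \<xi> n \<omega>) K j - z \<cdot>\<^sub>m 1\<^sub>m K) = tdet \<alpha> \<beta> K
           \<and> (\<forall>m<K. cmod (\<alpha> m - (\<mu>1 + \<mu>2)) \<le> \<eta>) \<and> (\<forall>m. 0 < m \<longrightarrow> m < K \<longrightarrow> cmod (\<beta> m - \<mu>1 * \<mu>2) \<le> \<eta>)"
          by (rule block_core[where b=b and c=c and d=d and z=z and \<sigma>=\<sigma> and \<xi>=\<xi> and \<omega>=\<omega> and n=n and K=K and j=j and t=t, OF j1 jKn s12[unfolded w0_def] p12[unfolded p0_def] t\<eta> tb bc'(1) bc'(2) bc'(3) small])
        then obtain \<alpha> \<beta> where dt: "det (principal_block (R_mat b c d \<sigma> \<xi> n \<omega>) K j - z \<cdot>\<^sub>m 1\<^sub>m K) = tdet \<alpha> \<beta> K"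
          and ha: "\<forall>m<K. cmod (\<alpha> m - (\<mu>1 + \<mu>2)) \<le> \<eta>"
          and hb: "\<forall>m. 0 < m \<longrightarrow> m < K \<longrightarrow> cmod (\<beta> m - \<mu>1 * \<mu>2) \<le> \<eta>"
          by blast
        have kK: "K0 \<le> K" using nK unfolding K_def .
        have gr: "tdet \<alpha> \<beta> K \<noteq> 0 \<and> \<bar>ln (cmod (tdet \<alpha> \<beta> K)) - real K * ln (cmod \<mu>1)\<bar> < real K * (\<epsilon> / 2)"
          using spec[OF spec[OF spec[OF growth, of K], of \<alpha>], of \<beta>] kK ha hb by blast
        have xsin: "xs n \<in> {0..1}" using xs0[of n] xs1 by simp
        have gam: "gamma_fn b c d (xs n) z = ln (G (xs n))"
          unfolding G_def using cdnz[OF xsin] by (intro gamma_eq) auto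
        have Kpos: "0 < real K" using kpos[of n] unfolding K_def by simp
        have "\<bar>real K * gamma_fn b c d (xs n) z - real K * ln (cmod \<mu>1)\<bar> < real K * (\<epsilon> / 2)"
          unfolding gam right_diff_distrib[symmetric] abs_mult using Kpos ngam by simp
        moreover have "\<bar>ln (cmod (tdet \<alpha> \<beta> K)) - real K * ln (cmod \<mu>1)\<bar> < real K * (\<epsilon> / 2)"
          using gr by blast
        ultimately have "\<bar>ln (cmod (tdet \<alpha> \<beta> K)) - real K * gamma_fn b c d (xs n) z\<bar> < real K * \<epsilon>"
          using mult_2[of "real K * (\<epsilon> / 2)"] by (simp add: algebra_simps) (smt (verit))
        then show False using w gr dt unfolding K_def xs_def by simp
      qed
    qed
    have UN_sets: "(\<Union>i\<in>J. Ev i) \<in> sets M" using finJ Ev_sets by (intro sets.finite_UN) auto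
    have "measure M ?bad \<le> measure M (\<Union>i\<in>J. Ev i)"
      by (rule P.finite_measure_mono[OF sub UN_sets])
    also have "\<dots> \<le> (\<Sum>i\<in>J. measure M (Ev i))" by (rule measure_UNION_le[OF finJ Ev_sets])
    also have "\<dots> \<le> (\<Sum>i\<in>J. (\<sigma> n)\<^sup>2 * V / (t / 2)\<^sup>2)" by (rule sum_mono[OF Ev_meas])
    also have "\<dots> = real (card J) * ((\<sigma> n)\<^sup>2 * V / (t / 2)\<^sup>2)" by simp
    also have "\<dots> \<le> real (3 * K) * ((\<sigma> n)\<^sup>2 * V / (t / 2)\<^sup>2)"
      using cardJ V0 by (intro mult_right_mono) auto
    also have "\<dots> = g n" unfolding g_def K_def by simp
    finally show ?thesis by simp
  qed
  show ?thesis
  proof (rule Lim_null_comparison[OF _ g_lim])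
    show "eventually (\<lambda>n. norm (measure M {\<omega> \<in> space M.
        det (principal_block (R_mat b c d \<sigma> \<xi> n \<omega>) (k n) j - z \<cdot>\<^sub>m 1\<^sub>m (k n)) = 0 \<or>
        \<bar>ln (cmod (det (principal_block (R_mat b c d \<sigma> \<xi> n \<omega>) (k n) j - z \<cdot>\<^sub>m 1\<^sub>m (k n))))
          - real (k n) * gamma_fn b c d (real (j * k n) / real n) z\<bar> \<ge> real (k n) * \<epsilon>}) \<le> g n) sequentially"
      using ev_n ev_xs ev_K ev_gam by eventually_elim (rule bound)
  qed
qed


theorem lemma5:
  fixes M :: "'w measure"
    and b c d :: "real \<Rightarrow> complex"
    and \<sigma> :: "nat \<Rightarrow> real"
    and \<xi> :: "nat \<Rightarrow> nat \<Rightarrow> nat \<Rightarrow> 'w \<Rightarrow> complex"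
    and \<mu> :: "complex measure"
    and k :: "nat \<Rightarrow> nat"
    and j :: nat
  assumes "prob_space M"
    and "continuous_on {0..1} b" "continuous_on {0..1} c" "continuous_on {0..1} d"
    and "\<And>x. x \<in> {0..1} \<Longrightarrow> c x * d x \<noteq> 0"
    and "\<And>n. \<sigma> n > 0" "\<sigma> \<longlonglongrightarrow> 0"
    and "\<And>n r s. r < n \<Longrightarrow> s < n \<Longrightarrow> tridiag r s \<Longrightarrow> \<xi> n r s \<in> borel_measurable M"
    and "\<And>n. prob_space.indep_vars M (\<lambda>_. borel) (\<lambda>(r, s). \<xi> n r s)
                {(r, s). r < n \<and> s < n \<and> tridiag r s}"
    and "\<And>n r s. r < n \<Longrightarrow> s < n \<Longrightarrow> tridiag r s \<Longrightarrow> distr M borel (\<xi> n r s) = \<mu>"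
    and "\<And>n r s. r < n \<Longrightarrow> s < n \<Longrightarrow> tridiag r s \<Longrightarrow> integrable M (\<xi> n r s)"
    and "\<And>n r s. r < n \<Longrightarrow> s < n \<Longrightarrow> tridiag r s \<Longrightarrow> prob_space.expectation M (\<xi> n r s) = 0"
    and "\<And>n r s. r < n \<Longrightarrow> s < n \<Longrightarrow> tridiag r s \<Longrightarrow>
           integrable M (\<lambda>\<omega>. (cmod (\<xi> n r s \<omega>))\<^sup>2)"
    and "\<And>n. k n > 0" "filterlim k at_top sequentially"
    and "(\<lambda>n. real (k n) / real n) \<longlonglongrightarrow> 0"
    and "(\<lambda>n. real (k n) * (\<sigma> n)\<^sup>2) \<longlonglongrightarrow> 0"
    and "j \<ge> 1"
  shows "AE z in lborel. \<forall>\<epsilon>>0.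
     (\<lambda>n. measure M {\<omega> \<in> space M.
        det (principal_block (R_mat b c d \<sigma> \<xi> n \<omega>) (k n) j - z \<cdot>\<^sub>m 1\<^sub>m (k n)) = 0 \<or>
        \<bar>ln (cmod (det (principal_block (R_mat b c d \<sigma> \<xi> n \<omega>) (k n) j - z \<cdot>\<^sub>m 1\<^sub>m (k n))))
          - real (k n) * gamma_fn b c d (real (j * k n) / real n) z\<bar> \<ge> real (k n) * \<epsilon>})
     \<longlonglongrightarrow> 0"
proof -
  have p0: "c 0 * d 0 \<noteq> 0" using assms(5)[of 0] by simp
  obtain N where N: "N \<in> null_sets lborel"
    and hN: "\<forall>z. cmod (mup (b 0 - z) (c 0 * d 0)) = cmod (mum (b 0 - z) (c 0 * d 0)) \<longrightarrow> z \<in> N"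
    using bad_null[OF p0, of "b 0"] by blast
  have allP: "\<forall>\<epsilon>>0. (\<lambda>n. measure M {\<omega> \<in> space M.
        det (principal_block (R_mat b c d \<sigma> \<xi> n \<omega>) (k n) j - z \<cdot>\<^sub>m 1\<^sub>m (k n)) = 0 \<or>
        \<bar>ln (cmod (det (principal_block (R_mat b c d \<sigma> \<xi> n \<omega>) (k n) j - z \<cdot>\<^sub>m 1\<^sub>m (k n))))
          - real (k n) * gamma_fn b c d (real (j * k n) / real n) z\<bar> \<ge> real (k n) * \<epsilon>})
     \<longlonglongrightarrow> 0" if zN: "z \<notin> N" for z
  proof (intro allI impI)
    have zg: "cmod (mup (b 0 - z) (c 0 * d 0)) \<noteq> cmod (mum (b 0 - z) (c 0 * d 0))" using hN zN by blast
    fix \<epsilon> :: real assume e: "\<epsilon> > 0"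
    show "(\<lambda>n. measure M {\<omega> \<in> space M.
        det (principal_block (R_mat b c d \<sigma> \<xi> n \<omega>) (k n) j - z \<cdot>\<^sub>m 1\<^sub>m (k n)) = 0 \<or>
        \<bar>ln (cmod (det (principal_block (R_mat b c d \<sigma> \<xi> n \<omega>) (k n) j - z \<cdot>\<^sub>m 1\<^sub>m (k n))))
          - real (k n) * gamma_fn b c d (real (j * k n) / real n) z\<bar> \<ge> real (k n) * \<epsilon>})
     \<longlonglongrightarrow> 0"
      by (rule main_fixed[OF assms(1-6) assms(8) assms(10) assms(13) assms(14) assms(15) assms(16) assms(17) assms(18) zg e])
  qed
  show ?thesis by (rule AE_I'[OF N]) (use allP in blast)
qed

end
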